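(* Let $(V,Y,\mathbf 1,\omega)$ be a vertex operator algebra of central charge $c\ne0$. Then $g(V)_{\ge0}W=W$ for every weak $V$-module $W$; in particular $g(V)_{\ge0}V=V$.
   Context: A weak $V$-module is a module for $V$ regarded as a vertex algebra. For a weak module $W$, $g(V)_{\ge0}W=\mathrm{span}\{v_nw\mid v\in V,\ n\ge0,\ w\in W\}$, where $Y_W(v,x)=\sum_nv_nx^{-n-1}$. *)

theory Defs
  imports Complex_Main "HOL-Library.Groups_Big_Fun"
begin

text \<open>Modes: a vertex operator is encoded by its modes, Y(u,x) = sum_n (Y u n) x^(-n-1).
  The Jacobi identity is encoded by its component form (Borcherds identity), for all
  integers l m n; all sums are finite by the truncation conditions.\<close>

definition borcherds ::
  "(complex \<Rightarrow> 'w::ab_group_add \<Rightarrow> 'w) \<Rightarrow> ('v \<Rightarrow> int \<Rightarrow> 'v \<Rightarrow> 'v)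
   \<Rightarrow> ('v \<Rightarrow> int \<Rightarrow> 'w \<Rightarrow> 'w) \<Rightarrow> bool" where
  "borcherds sW Y YW \<longleftrightarrow> (\<forall>u v w l m n.
     Sum_any (\<lambda>i::nat. sW ((of_int m) gchoose i) (YW (Y u (l + int i) v) (m + n - int i) w))
   = Sum_any (\<lambda>i::nat. sW ((-1) ^ i * ((of_int l) gchoose i))
                         (YW u (l + m - int i) (YW v (n + int i) w)))
   - Sum_any (\<lambda>i::nat. sW ((-1) powi (l + int i) * ((of_int l) gchoose i))
                         (YW v (l + n - int i) (YW u (m + int i) w))))"

text \<open>Vertex operator algebra (V, Y, vac, om) of central charge c over the complex numbers
  (Frenkel--Lepowsky--Meurman / Lepowsky--Li), with V_(n) the L(0)-eigenspace of eigenvalue n,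
  where L(n) = om_(n+1).\<close>

definition is_VOA ::
  "(complex \<Rightarrow> 'v::ab_group_add \<Rightarrow> 'v) \<Rightarrow> ('v \<Rightarrow> int \<Rightarrow> 'v \<Rightarrow> 'v) \<Rightarrow> 'v \<Rightarrow> 'v \<Rightarrow> complex \<Rightarrow> bool"
  where
  "is_VOA sV Y vac om c \<longleftrightarrow>
     vector_space sV
   \<and> (\<forall>u n. Vector_Spaces.linear sV sV (Y u n))
   \<and> (\<forall>n w. Vector_Spaces.linear sV sV (\<lambda>u. Y u n w))
   \<and> (\<forall>u v. \<exists>N. \<forall>n\<ge>N. Y u n v = 0)
   \<and> (\<forall>n v. Y vac n v = (if n = -1 then v else 0))
   \<and> (\<forall>v n. n \<ge> 0 \<longrightarrow> Y v n vac = 0)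
   \<and> (\<forall>v. Y v (-1) vac = v)
   \<and> borcherds sV Y Y
   \<and> (\<forall>m n v. Y om (m+1) (Y om (n+1) v) - Y om (n+1) (Y om (m+1) v)
        = sV (of_int (m - n)) (Y om (m+n+1) v)
          + sV (if m + n = 0 then (of_int (m^3 - m) / 12) * c else 0) v)
   \<and> (\<forall>v n w. Y (Y om 0 v) n w = sV (- of_int n) (Y v (n - 1) w))
   \<and> module.span sV (\<Union>n::int. {v. Y om 1 v = sV (of_int n) v}) = UNIV
   \<and> (\<forall>n::int. \<exists>B. finite B \<and> {v. Y om 1 v = sV (of_int n) v} \<subseteq> module.span sV B)
   \<and> (\<exists>N::int. \<forall>n<N. {v. Y om 1 v = sV (of_int n) v} = {0})"

text \<open>Weak module: module for V regarded as a vertex algebra.\<close>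

definition is_weak_module ::
  "(complex \<Rightarrow> 'v::ab_group_add \<Rightarrow> 'v) \<Rightarrow> ('v \<Rightarrow> int \<Rightarrow> 'v \<Rightarrow> 'v) \<Rightarrow> 'v
   \<Rightarrow> (complex \<Rightarrow> 'w::ab_group_add \<Rightarrow> 'w) \<Rightarrow> ('v \<Rightarrow> int \<Rightarrow> 'w \<Rightarrow> 'w) \<Rightarrow> bool" where
  "is_weak_module sV Y vac sW YW \<longleftrightarrow>
     vector_space sW
   \<and> (\<forall>u n. Vector_Spaces.linear sW sW (YW u n))
   \<and> (\<forall>n w. Vector_Spaces.linear sV sW (\<lambda>u. YW u n w))
   \<and> (\<forall>u w. \<exists>N. \<forall>n\<ge>N. YW u n w = 0)
   \<and> (\<forall>n w. YW vac n w = (if n = -1 then w else 0))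
   \<and> borcherds sW Y YW"

definition gV_nonneg ::
  "(complex \<Rightarrow> 'w::ab_group_add \<Rightarrow> 'w) \<Rightarrow> ('v \<Rightarrow> int \<Rightarrow> 'w \<Rightarrow> 'w) \<Rightarrow> 'w set" where
  "gV_nonneg sW YW = module.span sW {YW v n w | v n w. n \<ge> 0}"

end

theory Submission
  imports Defs
begin

lemma lin0: "Vector_Spaces.linear s1 s2 f \<Longrightarrow> f 0 = 0"
  by (metis Vector_Spaces.linear_iff add_cancel_right_right add_0)

lemma linS: "Vector_Spaces.linear s1 s2 f \<Longrightarrow> f (s1 c x) = s2 c (f x)"
  by (simp add: Vector_Spaces.linear_iff)

lemma sumany_span:
  assumes vs: "vector_space s" and h: "\<And>i. f i \<in> module.span s S"
  shows "Sum_any f \<in> module.span s S"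
proof -
  interpret M: vector_space s by (rule vs)
  show ?thesis
  proof (cases "finite {i. f i \<noteq> 0}")
    case True
    then show ?thesis unfolding Sum_any.expand_set using h by (intro M.span_sum) auto
  next
    case False
    then show ?thesis using M.span_zero by simp
  qed
qed

lemma key:
  fixes sV :: "complex \<Rightarrow> 'v::ab_group_add \<Rightarrow> 'v"
    and Y :: "'v \<Rightarrow> int \<Rightarrow> 'v \<Rightarrow> 'v"
    and sW :: "complex \<Rightarrow> 'w::ab_group_add \<Rightarrow> 'w"
    and YW :: "'v \<Rightarrow> int \<Rightarrow> 'w \<Rightarrow> 'w"
  assumes wm: "is_weak_module sV Y vac sW YW"
    and om3: "Y om 3 om = sV s vac"
    and om4: "\<And>k. k \<ge> 4 \<Longrightarrow> Y om k om = 0"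
    and s0: "s \<noteq> 0"
  shows "gV_nonneg sW YW = UNIV"
proof -
  have vs: "vector_space sW" and linW: "\<And>u n. Vector_Spaces.linear sW sW (YW u n)"
    and linV: "\<And>n w. Vector_Spaces.linear sV sW (\<lambda>u. YW u n w)"
    and tr: "\<And>u w. \<exists>N. \<forall>n\<ge>N. YW u n w = 0"
    and vacW: "\<And>n w. YW vac n w = (if n = -1 then w else 0)"
    and bor: "borcherds sW Y YW"
    using wm unfolding is_weak_module_def by auto
  interpret W: vector_space sW by (rule vs)
  let ?S = "{YW v n w | v n w. n \<ge> 0}"
  have "w \<in> gV_nonneg sW YW" for w
  proof -
    obtain N0 where N0: "\<forall>n\<ge>N0. YW om n w = 0" using tr by blast
    define n where "n = max N0 0"
    have n0: "n \<ge> 0" and nN: "\<And>i. n + int i \<ge> N0" unfolding n_def by auto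
    define m where "m = -1 - n"
    have B: "Sum_any (\<lambda>i::nat. sW ((of_int m) gchoose i) (YW (Y om (3 + int i) om) (m + n - int i) w))
   = Sum_any (\<lambda>i::nat. sW ((-1) ^ i * ((of_int 3) gchoose i))
                         (YW om (3 + m - int i) (YW om (n + int i) w)))
   - Sum_any (\<lambda>i::nat. sW ((-1) powi (3 + int i) * ((of_int 3) gchoose i))
                         (YW om (3 + n - int i) (YW om (m + int i) w)))"
      using bor unfolding borcherds_def by blast
    have L: "(\<lambda>i::nat. sW ((of_int m) gchoose i) (YW (Y om (3 + int i) om) (m + n - int i) w))
      = (\<lambda>i. if i = 0 then sW s w else 0)"
    proof
      fix i :: nat
      show "sW ((of_int m) gchoose i) (YW (Y om (3 + int i) om) (m + n - int i) w)
        = (if i = 0 then sW s w else 0)"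
      proof (cases "i = 0")
        case True
        have "YW (sV s vac) (-1) w = sW s (YW vac (-1) w)" using linS[OF linV] .
        then show ?thesis using True om3 vacW m_def by simp
      next
        case False
        then have "Y om (3 + int i) om = 0" using om4 by simp
        then show ?thesis using False lin0[OF linV] by simp
      qed
    qed
    have R1: "(\<lambda>i::nat. sW ((-1) ^ i * ((of_int 3) gchoose i))
                         (YW om (3 + m - int i) (YW om (n + int i) w))) = (\<lambda>_. 0)"
      using N0 nN lin0[OF linW] by auto
    have R2: "Sum_any (\<lambda>i::nat. sW ((-1) powi (3 + int i) * ((of_int 3) gchoose i))
                         (YW om (3 + n - int i) (YW om (m + int i) w))) \<in> gV_nonneg sW YW"
      unfolding gV_nonneg_def
    proof (rule sumany_span[OF vs])
      fix i :: nat
      show "sW ((-1) powi (3 + int i) * ((of_int 3) gchoose i))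
                         (YW om (3 + n - int i) (YW om (m + int i) w)) \<in> W.span ?S"
      proof (cases "i \<le> 3")
        case True
        then have "YW om (3 + n - int i) (YW om (m + int i) w) \<in> ?S" using n0 by force
        then show ?thesis by (intro W.span_scale W.span_base)
      next
        case False
        have "(of_int 3 gchoose i :: complex) = of_nat (3 choose i)"
          by (metis binomial_gbinomial of_int_of_nat_eq of_nat_numeral)
        then have "(of_int 3 gchoose i :: complex) = 0" using False by simp
        then show ?thesis using W.span_zero by simp
      qed
    qed
    have "sW s w = - Sum_any (\<lambda>i::nat. sW ((-1) powi (3 + int i) * ((of_int 3) gchoose i))
                         (YW om (3 + n - int i) (YW om (m + int i) w)))"
      using B unfolding L R1 Sum_any.neutral by (simp add: Sum_any.delta)
    then have "sW s w \<in> gV_nonneg sW YW" using R2 unfolding gV_nonneg_def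
      by (simp add: W.span_neg)
    then have "sW (inverse s) (sW s w) \<in> gV_nonneg sW YW" unfolding gV_nonneg_def
      by (rule W.span_scale)
    then show ?thesis using s0 by simp
  qed
  then show ?thesis by auto
qed

theorem mainTheorem10:
  fixes sV :: "complex \<Rightarrow> 'v::ab_group_add \<Rightarrow> 'v"
    and Y :: "'v \<Rightarrow> int \<Rightarrow> 'v \<Rightarrow> 'v"
    and vac om :: 'v and c :: complex
    and sW :: "complex \<Rightarrow> 'w::ab_group_add \<Rightarrow> 'w"
    and YW :: "'v \<Rightarrow> int \<Rightarrow> 'w \<Rightarrow> 'w"
  assumes "is_VOA sV Y vac om c"
    and "c \<noteq> 0"
    and "is_weak_module sV Y vac sW YW"
  shows "gV_nonneg sW YW = UNIV \<and> gV_nonneg sV Y = UNIV"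
proof -
  have voa: "vector_space sV" "\<And>u n. Vector_Spaces.linear sV sV (Y u n)"
    "\<And>n w. Vector_Spaces.linear sV sV (\<lambda>u. Y u n w)"
    "\<And>u v. \<exists>N. \<forall>n\<ge>N. Y u n v = 0"
    "\<And>n v. Y vac n v = (if n = -1 then v else 0)"
    "\<And>v n. n \<ge> 0 \<Longrightarrow> Y v n vac = 0"
    "\<And>v. Y v (-1) vac = v"
    "borcherds sV Y Y"
    and vir: "\<And>m n v. Y om (m+1) (Y om (n+1) v) - Y om (n+1) (Y om (m+1) v)
        = sV (of_int (m - n)) (Y om (m+n+1) v)
          + sV (if m + n = 0 then (of_int (m^3 - m) / 12) * c else 0) v"
    using assms(1) unfolding is_VOA_def by auto
  interpret V: vector_space sV by (rule voa(1))
  have wmV: "is_weak_module sV Y vac sV Y"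
    unfolding is_weak_module_def using voa by blast
  have omk: "Y om k om = sV (if k = 3 then c / 2 else 0) vac" if k3: "k \<ge> 3" for k
  proof -
    have e: "Y om ((k-1)+1) (Y om ((-2)+1) vac) - Y om ((-2)+1) (Y om ((k-1)+1) vac)
        = sV (of_int ((k-1) - (-2))) (Y om ((k-1)+(-2)+1) vac)
          + sV (if (k-1) + (-2) = 0 then (of_int ((k-1)^3 - (k-1)) / 12) * c else 0) vac"
      by (rule vir)
    have a: "Y om ((k-1)+(-2)+1) vac = 0" using voa(6) k3 by simp
    have b: "Y om ((k-1)+1) vac = 0" using voa(6) k3 by simp
    have z: "Y om (-1) 0 = 0" using lin0[OF voa(2)] .
    have "Y om k om = sV (if k - 3 = 0 then (of_int ((k-1)^3 - (k-1)) / 12) * c else 0) vac"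
      using e a b z voa(7) by simp
    moreover have "(if k - 3 = 0 then (of_int ((k-1)^3 - (k-1)) / 12) * c else 0) = (if k = 3 then c / 2 else 0)"
      by simp
    ultimately show ?thesis by simp
  qed
  have om3: "Y om 3 om = sV (c/2) vac" using omk by simp
  have om4: "\<And>k. k \<ge> 4 \<Longrightarrow> Y om k om = 0" using omk by simp
  have c2: "c / 2 \<noteq> 0" using assms(2) by simp
  show ?thesis using key[OF assms(3) om3 om4 c2] key[OF wmV om3 om4 c2] by simp
qed

end
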